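(* For $k\ge 2$, the number of minimal unavoidable subsets of $\overline{S_k}$ is at most $\binom{k!}{k!/2}$.
   Context: For $\sigma\in S_n$, the cyclic permutation $[\sigma]$ is the set of all rotations of $\sigma$. For $\pi\in S_k$, the totally vincular pattern $\overline{\pi}$ is $\pi$ with all adjacent positions overlined; a cyclic permutation $[\sigma]$ of length $n\ge k$ contains $\overline{\pi}$ if some $k$ cyclically consecutive entries of $\sigma$ are order-isomorphic to $\pi$. $\overline{S_k}$ is the set of totally vincular patterns of length $k$. For $\Pi\subseteq\overline{S_k}$, $\mathrm{Av}_n[\Pi]$ is the set of cyclic permutations of length $n$ containing no pattern of $\Pi$. $\Pi$ is unavoidable if $|\mathrm{Av}_n[\Pi]|=0$ for all sufficiently large $n$, avoidable otherwise; it is minimal unavoidable if it is unavoidable and every proper subset is avoidable. *)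

theory Defs
  imports Main
begin

definition perms :: "nat \<Rightarrow> nat list set" where
  "perms n = {\<sigma>. distinct \<sigma> \<and> set \<sigma> = {1..n}}"

text \<open>The cyclic permutation [sigma]: the set of all rotations of sigma.\<close>
definition cyc_class :: "nat list \<Rightarrow> nat list set" where
  "cyc_class \<sigma> = {rotate i \<sigma> | i. i < length \<sigma>}"

definition order_iso :: "nat list \<Rightarrow> nat list \<Rightarrow> bool" where
  "order_iso xs ys \<longleftrightarrow> length xs = length ys \<and>
     (\<forall>i < length xs. \<forall>j < length xs. xs ! i < xs ! j \<longleftrightarrow> ys ! i < ys ! j)"

definition cyc_window :: "nat list \<Rightarrow> nat \<Rightarrow> nat \<Rightarrow> nat list" where
  "cyc_window \<sigma> i k = map (\<lambda>j. \<sigma> ! ((i + j) mod length \<sigma>)) [0..<k]"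

text \<open>[sigma] contains the totally vincular pattern overline(pi).\<close>
definition cyc_contains :: "nat list \<Rightarrow> nat list \<Rightarrow> bool" where
  "cyc_contains \<sigma> \<pi> \<longleftrightarrow> length \<pi> \<le> length \<sigma> \<and>
     (\<exists>i < length \<sigma>. order_iso (cyc_window \<sigma> i (length \<pi>)) \<pi>)"

definition Av :: "nat \<Rightarrow> nat list set \<Rightarrow> nat list set set" where
  "Av n \<Pi> = {cyc_class \<sigma> | \<sigma>. \<sigma> \<in> perms n \<and> (\<forall>\<pi> \<in> \<Pi>. \<not> cyc_contains \<sigma> \<pi>)}"

definition unavoidable :: "nat list set \<Rightarrow> bool" where
  "unavoidable \<Pi> \<longleftrightarrow> (\<exists>N. \<forall>n \<ge> N. card (Av n \<Pi>) = 0)"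

text \<open>Minimal unavoidable subsets of overline(S_k) (patterns identified with pi in S_k).\<close>
definition minimal_unavoidable :: "nat \<Rightarrow> nat list set \<Rightarrow> bool" where
  "minimal_unavoidable k \<Pi> \<longleftrightarrow> \<Pi> \<subseteq> perms k \<and> unavoidable \<Pi> \<and>
     (\<forall>\<Pi>'. \<Pi>' \<subset> \<Pi> \<longrightarrow> \<not> unavoidable \<Pi>')"

end

theory Submission
  imports Defs "HOL.Binomial_Plus"
begin

definition permutations_of_set :: "'a set \<Rightarrow> 'a list set" where
  "permutations_of_set S = {xs. set xs = S \<and> distinct xs}"

lemma card_permutations_of_set:
  assumes "finite S"
  shows "card (permutations_of_set S) = fact (card S)"
proof -
  have "permutations_of_set S = {xs. length xs = card S \<and> distinct xs \<and> set xs \<subseteq> S}"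
  proof (rule set_eqI, rule iffI)
    fix xs assume "xs \<in> {xs. length xs = card S \<and> distinct xs \<and> set xs \<subseteq> S}"
    then have "set xs \<subseteq> S" "card (set xs) = card S" "distinct xs" by (auto simp: distinct_card)
    then show "xs \<in> permutations_of_set S" using assms card_subset_eq
      by (auto simp: permutations_of_set_def)
  qed (auto simp: permutations_of_set_def distinct_card)
  then have "card (permutations_of_set S) = \<Prod>{card S - card S + 1 .. card S}"
    using card_lists_distinct_length_eq[OF assms, of "card S"] by simp
  then show ?thesis by (simp add: fact_prod)
qed

lemma finite_permutations_of_set:
  assumes "finite S" shows "finite (permutations_of_set S)"
proof -
  have "permutations_of_set S \<subseteq> {xs. set xs \<subseteq> S \<and> length xs \<le> card S}"
    using assms by (auto simp: permutations_of_set_def distinct_card)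
  then show ?thesis using finite_lists_length_le[OF assms] finite_subset by blast
qed

lemma prefix_count:
  assumes fin: "finite S" and AS: "A \<subseteq> S"
  shows "card {xs \<in> permutations_of_set S. set (take (card A) xs) = A}
         = fact (card A) * fact (card S - card A)"
proof -
  have finA: "finite A" using fin AS finite_subset by blast
  let ?P = "permutations_of_set A \<times> permutations_of_set (S - A)"
  let ?f = "\<lambda>(u, v). u @ v"
  have eq: "{xs \<in> permutations_of_set S. set (take (card A) xs) = A} = ?f ` ?P"
  proof (rule set_eqI, rule iffI)
    fix xs assume xs: "xs \<in> {xs \<in> permutations_of_set S. set (take (card A) xs) = A}"
    then have d: "distinct xs" "set xs = S" "set (take (card A) xs) = A"
      by (auto simp: permutations_of_set_def)
    have dt: "distinct (take (card A) xs)" "distinct (drop (card A) xs)"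
      using d(1) by auto
    have "set (drop (card A) xs) = S - A"
    proof -
      have "set (take (card A) xs) \<inter> set (drop (card A) xs) = {}"
        using d(1) by (metis append_take_drop_id distinct_append)
      moreover have "set (take (card A) xs) \<union> set (drop (card A) xs) = S"
        using d(2) by (metis append_take_drop_id set_append)
      ultimately show ?thesis using d(3) by blast
    qed
    then show "xs \<in> ?f ` ?P"
      using dt d(3)
      by (intro image_eqI[of _ _ "(take (card A) xs, drop (card A) xs)"])
         (auto simp: permutations_of_set_def)
  next
    fix xs assume "xs \<in> ?f ` ?P"
    then obtain u v where uv: "xs = u @ v" "distinct u" "set u = A" "distinct v" "set v = S - A"
      by (auto simp: permutations_of_set_def)
    have lu: "length u = card A" using uv distinct_card by metis
    show "xs \<in> {xs \<in> permutations_of_set S. set (take (card A) xs) = A}"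
      using uv lu AS by (auto simp: permutations_of_set_def)
  qed
  have inj: "inj_on ?f ?P"
  proof (rule inj_onI)
    fix x y assume xy: "x \<in> ?P" "y \<in> ?P" "?f x = ?f y"
    obtain u v where x: "x = (u, v)" by (cases x)
    obtain u' v' where y: "y = (u', v')" by (cases y)
    have a: "(u, v) \<in> ?P" "(u', v') \<in> ?P" "u @ v = u' @ v'" using xy x y by auto
    have "length u = card A" "length u' = card A"
      using a(1,2) by (auto simp: permutations_of_set_def dest: distinct_card)
    then show "x = y" using a(3) x y by (metis append_eq_append_conv)
  qed
  have c1: "card (S - A) = card S - card A" using card_Diff_subset[OF finA AS] .
  have c2: "card (permutations_of_set A) = fact (card A)"
    using finA by (rule card_permutations_of_set)
  have c3: "card (permutations_of_set (S - A)) = fact (card (S - A))"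
    using fin card_permutations_of_set[of "S - A"] by simp
  show ?thesis
    unfolding eq card_image[OF inj] card_cartesian_product c2 c3 c1 ..
qed

lemma sperner:
  assumes fin: "finite S"
    and FS: "F \<subseteq> Pow S"
    and anti: "\<And>A B. A \<in> F \<Longrightarrow> B \<in> F \<Longrightarrow> A \<subseteq> B \<Longrightarrow> A = B"
  shows "card F \<le> card S choose (card S div 2)"
proof -
  let ?n = "card S"
  let ?M = "?n choose (?n div 2)"
  let ?C = "\<lambda>A. {xs \<in> permutations_of_set S. set (take (card A) xs) = A}"
  have finF: "finite F" using finite_subset[OF FS] fin by simp
  have disj: "\<forall>A\<in>F. \<forall>B\<in>F. A \<noteq> B \<longrightarrow> ?C A \<inter> ?C B = {}"
  proof (intro ballI impI)
    fix A B assume AB: "A \<in> F" "B \<in> F" "A \<noteq> B"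
    show "?C A \<inter> ?C B = {}"
    proof (rule ccontr)
      assume "?C A \<inter> ?C B \<noteq> {}"
      then obtain xs where "set (take (card A) xs) = A" "set (take (card B) xs) = B" by blast
      then have "A \<subseteq> B \<or> B \<subseteq> A"
      proof (cases "card A \<le> card B")
        case True
        then show ?thesis using set_take_subset_set_take[OF True, of xs] \<open>set (take (card A) xs) = A\<close> \<open>set (take (card B) xs) = B\<close> by blast
      next
        case False
        then have "card B \<le> card A" by simp
        then show ?thesis using set_take_subset_set_take[of "card B" "card A" xs] \<open>set (take (card A) xs) = A\<close> \<open>set (take (card B) xs) = B\<close> by blast
      qed
      then show False using anti AB by blast
    qed
  qed
  have "(\<Sum>A\<in>F. card (?C A)) = card (\<Union>A\<in>F. ?C A)"
    proof -
    have "\<forall>A\<in>F. finite (?C A)" by (intro ballI finite_subset[OF _ finite_permutations_of_set[OF fin]]) auto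
    from card_UN_disjoint[OF finF this disj] show ?thesis by (rule sym)
  qed
  also have "\<dots> \<le> card (permutations_of_set S)"
    by (rule card_mono) (use fin finite_permutations_of_set in auto)
  also have "\<dots> = fact ?n" using card_permutations_of_set[OF fin] .
  finally have sumle: "(\<Sum>A\<in>F. card (?C A)) \<le> fact ?n" .
  have each: "fact ?n \<le> ?M * card (?C A)" if "A \<in> F" for A
  proof -
    have AS: "A \<subseteq> S" using that FS by auto
    have le: "card A \<le> ?n" using card_mono[OF fin AS] .
    have "fact ?n = (?n choose card A) * card (?C A)"
      unfolding prefix_count[OF fin AS] using binomial_fact_lemma[OF le] by (metis mult.commute mult.assoc)
    also have "\<dots> \<le> ?M * card (?C A)"
      by (rule mult_le_mono1[OF binomial_maximum])
    finally show ?thesis .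
  qed
  have "card F * fact ?n = (\<Sum>A\<in>F. fact ?n)" by simp
  also have "\<dots> \<le> (\<Sum>A\<in>F. ?M * card (?C A))" by (rule sum_mono) (use each in auto)
  also have "\<dots> = ?M * (\<Sum>A\<in>F. card (?C A))" by (simp add: sum_distrib_left)
  also have "\<dots> \<le> ?M * fact ?n" using sumle by simp
  finally have "card F * fact ?n \<le> ?M * fact ?n" .
  then show ?thesis by (metis fact_gt_zero mult_le_cancel2 of_nat_0_less_iff)
qed

theorem proposition6p2:
  fixes k :: nat
  assumes "k \<ge> 2"
  shows "card {\<Pi>. minimal_unavoidable k \<Pi>} \<le> (fact k) choose (fact k div 2)"
proof -
  have pk: "perms k = permutations_of_set {1..k}"
    by (auto simp: perms_def permutations_of_set_def)
  have ck: "card (perms k) = fact k" unfolding pk by (simp add: card_permutations_of_set)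
  have "card {\<Pi>. minimal_unavoidable k \<Pi>} \<le> card (perms k) choose (card (perms k) div 2)"
  proof (rule sperner)
    show "finite (perms k)" unfolding pk by (simp add: finite_permutations_of_set)
    show "{\<Pi>. minimal_unavoidable k \<Pi>} \<subseteq> Pow (perms k)"
      by (auto simp: minimal_unavoidable_def)
    fix A B assume "A \<in> {\<Pi>. minimal_unavoidable k \<Pi>}" "B \<in> {\<Pi>. minimal_unavoidable k \<Pi>}" "A \<subseteq> B"
    then show "A = B" unfolding minimal_unavoidable_def by blast
  qed
  then show ?thesis unfolding ck .
qed

end
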